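(* Let ${\tt G}$ be a digraph and let $P$ be a downward closed (or upward closed) sub-poset of $SSG({\tt G})$. Then any two sign assignments $\epsilon,\epsilon'$ on $P$ are isomorphic, i.e. there is $\eta\colon P\to\mathbb Z_2$ with $\eta(x)+\epsilon'_{x,y}\equiv\epsilon_{x,y}+\eta(y)\pmod 2$ for every covering pair $x\,\tilde\triangleleft\,y$ in $P$.
   Context: A digraph ${\tt G}=(V,E)$ has finite $V$ and $E\subseteq(V\times V)\setminus\{(v,v)\}$. $SSG({\tt G})$ is the poset of spanning subgraphs of ${\tt G}$ (all vertices, any subset of edges) ordered by inclusion of edge sets. A sub-poset $P$ (with induced order) is downward closed if $h\le h'$ with $h'\in P$ implies $h\in P$, and upward closed if $h'\le h$ with $h'\in P$ implies $h\in P$. In a poset, $x\,\tilde\triangleleft\,y$ ($y$ covers $x$) means $x<y$ with nothing strictly between; a square is $x,y,y',z$ with $y\neq y'$, $x\,\tilde\triangleleft\,y\,\tilde\triangleleft\,z$, $x\,\tilde\triangleleft\,y'\,\tilde\triangleleft\,z$. A sign assignment assigns $\epsilon_{x,y}\in\mathbb Z_2$ to each covering pair such that $\epsilon_{x,y}+\epsilon_{y,z}\equiv\epsilon_{x,y'}+\epsilon_{y',z}+1\pmod 2$ for every square. *)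

theory Defs
  imports Main "HOL-Library.Z2"
begin

definition digraph :: "'a set \<Rightarrow> ('a \<times> 'a) set \<Rightarrow> bool" where
  "digraph V E \<longleftrightarrow> finite V \<and> E \<subseteq> (V \<times> V) - {(v, v) | v. True}"

text \<open>SSG(G): spanning subgraphs (V, H) with H \<subseteq> E, identified with their edge sets H,
  ordered by inclusion. Its carrier is Pow E.\<close>
definition SSG :: "'a set \<Rightarrow> ('a \<times> 'a) set \<Rightarrow> ('a \<times> 'a) set set" where
  "SSG V E = Pow E"

definition downward_closed :: "'b set set \<Rightarrow> 'b set set \<Rightarrow> bool" where
  "downward_closed Q P \<longleftrightarrow> P \<subseteq> Q \<and> (\<forall>h \<in> Q. \<forall>h' \<in> P. h \<subseteq> h' \<longrightarrow> h \<in> P)"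

definition upward_closed :: "'b set set \<Rightarrow> 'b set set \<Rightarrow> bool" where
  "upward_closed Q P \<longleftrightarrow> P \<subseteq> Q \<and> (\<forall>h \<in> Q. \<forall>h' \<in> P. h' \<subseteq> h \<longrightarrow> h \<in> P)"

definition covers :: "'b set set \<Rightarrow> 'b set \<Rightarrow> 'b set \<Rightarrow> bool" where
  "covers P x y \<longleftrightarrow> x \<in> P \<and> y \<in> P \<and> x \<subset> y \<and> \<not> (\<exists>w \<in> P. x \<subset> w \<and> w \<subset> y)"

definition is_square :: "'b set set \<Rightarrow> 'b set \<Rightarrow> 'b set \<Rightarrow> 'b set \<Rightarrow> 'b set \<Rightarrow> bool" where
  "is_square P x y y' z \<longleftrightarrow> y \<noteq> y' \<and> covers P x y \<and> covers P y z \<and> covers P x y' \<and> covers P y' z"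

text \<open>Sign assignment: values in Z2 (type bit) on covering pairs; values on
  non-covering pairs are irrelevant.\<close>
definition sign_assignment :: "'b set set \<Rightarrow> ('b set \<Rightarrow> 'b set \<Rightarrow> bit) \<Rightarrow> bool" where
  "sign_assignment P \<epsilon> \<longleftrightarrow>
     (\<forall>x y y' z. is_square P x y y' z \<longrightarrow> \<epsilon> x y + \<epsilon> y z = \<epsilon> x y' + \<epsilon> y' z + 1)"

definition iso_sign_assignments :: "'b set set \<Rightarrow> ('b set \<Rightarrow> 'b set \<Rightarrow> bit) \<Rightarrow> ('b set \<Rightarrow> 'b set \<Rightarrow> bit) \<Rightarrow> bool" where
  "iso_sign_assignments P \<epsilon> \<epsilon>' \<longleftrightarrow>
     (\<exists>\<eta> :: 'b set \<Rightarrow> bit. \<forall>x y. covers P x y \<longrightarrow> \<eta> x + \<epsilon>' x y = \<epsilon> x y + \<eta> y)"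

end

theory Submission imports Defs begin

lemma bit_cases2: "(a::bit) = 0 \<or> a = 1" by (metis bit_not_zero_iff)

lemma bit_self[simp]: "(a::bit) + a = 0"
  using bit_cases2[of a] by auto

definition mx :: "('b \<Rightarrow> nat) \<Rightarrow> 'b set \<Rightarrow> 'b" where
  "mx f x = (SOME e. e \<in> x \<and> f e = Max (f ` x))"

lemma mx_in: assumes "finite x" "x \<noteq> {}" shows "mx f x \<in> x" "f (mx f x) = Max (f ` x)"
proof -
  have "Max (f ` x) \<in> f ` x" using assms by simp
  then have "\<exists>e. e \<in> x \<and> f e = Max (f ` x)" by auto
  then show "mx f x \<in> x" "f (mx f x) = Max (f ` x)" unfolding mx_def by (metis (mono_tags, lifting) someI_ex)+
qed

lemma mx_diff: assumes "finite x" "inj_on f x" "e \<in> x" "e \<noteq> mx f x"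
  shows "mx f (x - {e}) = mx f x"
proof -
  have ne: "x \<noteq> {}" using assms by auto
  have m: "mx f x \<in> x" "f (mx f x) = Max (f ` x)" using mx_in[OF assms(1) ne] by auto
  have "f e \<noteq> f (mx f x)" using assms m inj_on_eq_iff by metis
  moreover have "f e \<le> Max (f ` x)" using assms by simp
  ultimately have lt: "f e < f (mx f x)" using m by simp
  have x1: "x - {e} \<noteq> {}" "finite (x - {e})" using m assms by auto
  have "Max (f ` (x - {e})) = Max (f ` x)"
  proof (rule antisym)
    show "Max (f ` (x - {e})) \<le> Max (f ` x)" using assms x1 by (intro Max_mono) auto
    show "Max (f ` x) \<le> Max (f ` (x - {e}))" using m assms x1 by (metis Max_ge finite_imageI image_eqI insert_Diff insert_iff)
  qed
  then have "mx f (x - {e}) \<in> x - {e} \<and> f (mx f (x - {e})) = f (mx f x)"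
    using mx_in[OF x1(2) x1(1)] m by simp
  then show ?thesis using assms m by (metis DiffD1 inj_on_eq_iff)
qed

function eta :: "('b \<Rightarrow> nat) \<Rightarrow> ('b set \<Rightarrow> 'b set \<Rightarrow> bit) \<Rightarrow> 'b set \<Rightarrow> bit" where
  "eta f d x = (if x = {} \<or> \<not> finite x then 0
     else eta f d (x - {mx f x}) + d (x - {mx f x}) x)"
  by pat_completeness auto
termination
  by (relation "measure (\<lambda>(f,d,x). card x)") (auto intro: card_Diff1_less mx_in)

declare eta.simps[simp del]

lemma covers_down:
  assumes "downward_closed (Pow E) P" "covers P x y"
  shows "\<exists>e. e \<in> y \<and> x = y - {e}"
proof -
  from assms(2) have xy: "x \<in> P" "y \<in> P" "x \<subset> y" "\<not> (\<exists>w \<in> P. x \<subset> w \<and> w \<subset> y)"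
    unfolding covers_def by auto
  obtain e where e: "e \<in> y" "e \<notin> x" using xy by auto
  have yE: "y \<subseteq> E" using assms(1) xy(2) unfolding downward_closed_def by auto
  have "insert e x \<in> Pow E" using yE xy(3) e(1) by auto
  moreover have "insert e x \<subseteq> y" using xy(3) e(1) by auto
  ultimately have "insert e x \<in> P" using assms(1) xy(2) unfolding downward_closed_def by blast
  then have "insert e x = y" using xy e by blast
  then show ?thesis using e by blast
qed

lemma covers_down_rev:
  assumes "downward_closed (Pow E) P" "y \<in> P" "e \<in> y"
  shows "covers P (y - {e}) y"
proof -
  have yE: "y \<subseteq> E" using assms(1,2) unfolding downward_closed_def by auto
  have "y - {e} \<in> Pow E" "y - {e} \<subseteq> y" using yE by auto
  then have "y - {e} \<in> P" using assms(1,2) unfolding downward_closed_def by blast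
  moreover have "\<not> (\<exists>w \<in> P. y - {e} \<subset> w \<and> w \<subset> y)" using assms(3) by blast
  ultimately show ?thesis using assms unfolding covers_def by blast
qed

lemma dc_diff:
  assumes "downward_closed (Pow E) P" "y \<in> P"
  shows "y - A \<in> P"
proof -
  have yE: "y \<subseteq> E" using assms unfolding downward_closed_def by auto
  have "y - A \<in> Pow E" "y - A \<subseteq> y" using yE by auto
  then show ?thesis using assms unfolding downward_closed_def by blast
qed

lemma down_main:
  fixes d :: "'b set \<Rightarrow> 'b set \<Rightarrow> bit"
  assumes dc: "downward_closed (Pow E) P" and fin: "finite E" and inj: "inj_on f E"
    and sq: "\<And>x y y' z. is_square P x y y' z \<Longrightarrow> d x y + d y z = d x y' + d y' z"
  shows "y \<in> P \<Longrightarrow> e \<in> y \<Longrightarrow> eta f d y = eta f d (y - {e}) + d (y - {e}) y"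
proof (induction "card y" arbitrary: y e rule: less_induct)
  case less
  have yE: "y \<subseteq> E" using less dc unfolding downward_closed_def by auto
  then have fy: "finite y" using fin finite_subset by blast
  have injy: "inj_on f y" using inj yE inj_on_subset by blast
  define m where "m = mx f y"
  have ne: "y \<noteq> {}" using less by auto
  have mi: "m \<in> y" using mx_in[OF fy ne] m_def by simp
  have ey: "eta f d y = eta f d (y - {m}) + d (y - {m}) y"
    using fy ne m_def by (subst eta.simps) simp
  show ?case
  proof (cases "e = m")
    case True then show ?thesis using ey by simp
  next
    case False
    define x where "x = y - {e}"
    define w where "w = y - {m} - {e}"
    have xm: "mx f x = m" using mx_diff[OF fy injy less(3)] False m_def x_def by simp
    have xne: "x \<noteq> {}" using mi False x_def by auto
    have fx: "finite x" using fy x_def by simp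
    have wx: "w = x - {m}" unfolding w_def x_def by auto
    have ex: "eta f d x = eta f d w + d w x"
      using fx xne xm wx by (subst eta.simps) simp
    have ymP: "y - {m} \<in> P" using dc_diff[OF dc less(2)] by blast
    have xP: "x \<in> P" using dc_diff[OF dc less(2)] x_def by blast
    have IH: "eta f d (y - {m}) = eta f d w + d w (y - {m})"
      using less(1)[of "y - {m}" e] ymP False less(3) card_Diff1_less[OF fy mi] w_def by auto
    have "is_square P w x (y - {m}) y"
      unfolding is_square_def
    proof (intro conjI)
      show "x \<noteq> y - {m}" using x_def mi False less by auto
      show "covers P w x" using covers_down_rev[OF dc xP, of m] wx mi False x_def by auto
      show "covers P x y" using covers_down_rev[OF dc less(2) less(3)] x_def by simp
      show "covers P w (y - {m})" using covers_down_rev[OF dc ymP, of e] w_def False less by auto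
      show "covers P (y - {m}) y" using covers_down_rev[OF dc less(2) mi] by simp
    qed
    from sq[OF this] have "d w x + d x y = d w (y - {m}) + d (y - {m}) y" .
    then show ?thesis using ey ex IH x_def by (metis add.assoc)
  qed
qed

lemma down_exists:
  fixes d :: "'b set \<Rightarrow> 'b set \<Rightarrow> bit"
  assumes dc: "downward_closed (Pow E) P" and fin: "finite E"
    and sq: "\<And>x y y' z. is_square P x y y' z \<Longrightarrow> d x y + d y z = d x y' + d y' z"
  shows "\<exists>\<eta>. \<forall>x y. covers P x y \<longrightarrow> \<eta> y = \<eta> x + d x y"
proof -
  obtain f :: "_ \<Rightarrow> nat" where inj: "inj_on f E" using finite_imp_inj_to_nat_seg[OF fin] by blast
  show ?thesis
  proof (intro exI allI impI)
    fix x y assume c: "covers P x y"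
    then obtain e where "e \<in> y" "x = y - {e}" using covers_down[OF dc] by blast
    moreover have "y \<in> P" using c unfolding covers_def by auto
    ultimately show "eta f d y = eta f d x + d x y" using down_main[where d=d, OF dc fin inj sq] by blast
  qed
qed


lemma bit_self2[simp]: "(a::bit) + (a + b) = b"
  by (metis add.assoc add_0 bit_self)

lemma compl_covers:
  assumes "P \<subseteq> Pow E" "x \<subseteq> E" "y \<subseteq> E"
  shows "covers ((\<lambda>h. E - h) ` P) (E - y) (E - x) \<longleftrightarrow> covers P x y"
proof -
  let ?Q = "(\<lambda>h. E - h) ` P"
  have mem: "\<And>h. h \<subseteq> E \<Longrightarrow> (E - h \<in> ?Q) = (h \<in> P)"
  proof
    fix h assume h: "h \<subseteq> E" "E - h \<in> ?Q"
    then obtain g where "g \<in> P" "E - h = E - g" by auto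
    moreover have "g \<subseteq> E" using assms(1) \<open>g \<in> P\<close> by auto
    ultimately show "h \<in> P" using h(1) by (metis double_diff order_refl)
  qed auto
  have ss: "(E - y \<subset> E - x) = (x \<subset> y)" using assms by blast
  have btw: "(\<exists>w \<in> ?Q. E - y \<subset> w \<and> w \<subset> E - x) = (\<exists>w \<in> P. x \<subset> w \<and> w \<subset> y)"
  proof
    assume "\<exists>w \<in> ?Q. E - y \<subset> w \<and> w \<subset> E - x"
    then obtain g where g: "g \<in> P" "E - y \<subset> E - g" "E - g \<subset> E - x" by auto
    have "g \<subseteq> E" using g assms by auto
    then have "x \<subset> g \<and> g \<subset> y" using g assms by blast
    then show "\<exists>w \<in> P. x \<subset> w \<and> w \<subset> y" using g by blast
  next
    assume "\<exists>w \<in> P. x \<subset> w \<and> w \<subset> y"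
    then obtain g where g: "g \<in> P" "x \<subset> g" "g \<subset> y" by auto
    then have "E - y \<subset> E - g \<and> E - g \<subset> E - x" using assms by blast
    then show "\<exists>w \<in> ?Q. E - y \<subset> w \<and> w \<subset> E - x" using g by blast
  qed
  show ?thesis unfolding covers_def using mem assms ss btw by auto
qed

lemma uc_sup:
  assumes "upward_closed (Pow E) P" "g \<in> P" "g \<subseteq> h" "h \<subseteq> E"
  shows "h \<in> P"
  using assms unfolding upward_closed_def by blast

lemma both_exists:
  fixes d :: "'b set \<Rightarrow> 'b set \<Rightarrow> bit"
  assumes cl: "downward_closed (Pow E) P \<or> upward_closed (Pow E) P" and fin: "finite E"
    and sq: "\<And>x y y' z. is_square P x y y' z \<Longrightarrow> d x y + d y z = d x y' + d y' z"
  shows "\<exists>\<eta>. \<forall>x y. covers P x y \<longrightarrow> \<eta> y = \<eta> x + d x y"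
proof (cases "downward_closed (Pow E) P")
  case True then show ?thesis using down_exists[where d=d, OF True fin sq] by blast
next
  case False
  then have uc: "upward_closed (Pow E) P" using cl by blast
  then have PE: "P \<subseteq> Pow E" unfolding upward_closed_def by auto
  let ?Q = "(\<lambda>h. E - h) ` P"
  define d' where "d' a b = d (E - b) (E - a)" for a b
  have QE: "?Q \<subseteq> Pow E" by auto
  have cQ: "covers ?Q a b \<Longrightarrow> covers P (E - b) (E - a)" for a b
  proof -
    assume c: "covers ?Q a b"
    then have "a \<subseteq> E" "b \<subseteq> E" unfolding covers_def by auto
    then show ?thesis using c compl_covers[OF PE, of "E - b" "E - a"] by (simp add: double_diff)
  qed
  have dcQ: "downward_closed (Pow E) ?Q"
    unfolding downward_closed_def
  proof (intro conjI ballI impI QE)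
    fix h h' assume h: "h \<in> Pow E" "h' \<in> ?Q" "h \<subseteq> h'"
    then obtain g where g: "g \<in> P" "h' = E - g" by auto
    have gE: "g \<subseteq> E" using PE g(1) by auto
    have "g \<subseteq> E - h" using gE g(2) h(3) by blast
    then have "E - h \<in> P" using uc_sup[OF uc g(1), of "E - h"] by blast
    moreover have "h = E - (E - h)" using h by auto
    ultimately show "h \<in> ?Q" by blast
  qed
  have sqQ: "d' a b + d' b c = d' a b' + d' b' c" if s: "is_square ?Q a b b' c" for a b b' c
  proof -
    have "b \<subseteq> E" "b' \<subseteq> E" using s unfolding is_square_def covers_def by auto
    then have "E - b \<noteq> E - b'" using s unfolding is_square_def by (metis double_diff order_refl)
    moreover have "covers P (E - c) (E - b')" "covers P (E - b') (E - a)"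
      "covers P (E - c) (E - b)" "covers P (E - b) (E - a)"
      using s cQ unfolding is_square_def by simp_all
    ultimately have "is_square P (E - c) (E - b') (E - b) (E - a)"
      unfolding is_square_def by simp
    from sq[OF this] show ?thesis unfolding d'_def by (metis add.commute)
  qed
  obtain \<eta>' where e: "\<forall>a b. covers ?Q a b \<longrightarrow> \<eta>' b = \<eta>' a + d' a b"
    using down_exists[where d=d', OF dcQ fin sqQ] by blast
  show ?thesis
  proof (intro exI allI impI)
    fix x y assume c: "covers P x y"
    then have xy: "x \<subseteq> E" "y \<subseteq> E" using PE unfolding covers_def by auto
    then have "covers ?Q (E - y) (E - x)" using compl_covers[OF PE] c by blast
    then have "\<eta>' (E - x) = \<eta>' (E - y) + d x y" using e xy unfolding d'_def by (simp add: double_diff)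
    then show "\<eta>' (E - y) = \<eta>' (E - x) + d x y" by (metis add.commute bit_self2)
  qed
qed

theorem theorem3p16:
  fixes V :: "'a set" and E :: "('a \<times> 'a) set" and P :: "('a \<times> 'a) set set"
    and \<epsilon> \<epsilon>' :: "('a \<times> 'a) set \<Rightarrow> ('a \<times> 'a) set \<Rightarrow> bit"
  assumes "digraph V E"
    and "downward_closed (SSG V E) P \<or> upward_closed (SSG V E) P"
    and "sign_assignment P \<epsilon>" and "sign_assignment P \<epsilon>'"
  shows "iso_sign_assignments P \<epsilon> \<epsilon>'"
proof -
  have finV: "finite V" and EV: "E \<subseteq> V \<times> V" using assms(1) unfolding digraph_def by auto
  have fin: "finite E" using finite_subset[OF EV] finV by blast
  have sq: "(\<epsilon> x y + \<epsilon>' x y) + (\<epsilon> y z + \<epsilon>' y z) = (\<epsilon> x y' + \<epsilon>' x y') + (\<epsilon> y' z + \<epsilon>' y' z)"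
    if s: "is_square P x y y' z" for x y y' z
  proof -
    have 1: "\<epsilon> x y + \<epsilon> y z = \<epsilon> x y' + \<epsilon> y' z + 1" using assms(3) s unfolding sign_assignment_def by blast
    have 2: "\<epsilon>' x y + \<epsilon>' y z = \<epsilon>' x y' + \<epsilon>' y' z + 1" using assms(4) s unfolding sign_assignment_def by blast
    have "(\<epsilon> x y + \<epsilon>' x y) + (\<epsilon> y z + \<epsilon>' y z) = (\<epsilon> x y + \<epsilon> y z) + (\<epsilon>' x y + \<epsilon>' y z)"
      by (simp only: add_ac)
    also have "\<dots> = (\<epsilon> x y' + \<epsilon> y' z + 1) + (\<epsilon>' x y' + \<epsilon>' y' z + 1)" using 1 2 by simp
    also have "\<dots> = (\<epsilon> x y' + \<epsilon>' x y') + (\<epsilon> y' z + \<epsilon>' y' z) + (1 + 1)" by (simp only: add_ac)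
    finally show ?thesis by (metis bit_self add_0_right)
  qed
  obtain \<eta> where e: "\<forall>x y. covers P x y \<longrightarrow> \<eta> y = \<eta> x + (\<epsilon> x y + \<epsilon>' x y)"
    using both_exists[where d="\<lambda>x y. \<epsilon> x y + \<epsilon>' x y", OF _ fin sq] assms(2) unfolding SSG_def by blast
  show ?thesis unfolding iso_sign_assignments_def
  proof (intro exI allI impI)
    fix x y assume "covers P x y"
    then have "\<eta> y = \<eta> x + (\<epsilon> x y + \<epsilon>' x y)" using e by blast
    then have "\<epsilon> x y + \<eta> y = \<eta> x + (\<epsilon> x y + (\<epsilon> x y + \<epsilon>' x y))" by (simp only: add_ac)
    then show "\<eta> x + \<epsilon>' x y = \<epsilon> x y + \<eta> y" by (simp only: bit_self2)
  qed
qed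

end
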